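(* Let $\mathcal{S}\subseteq\mathbb{Q}[x_1,\dots,x_n]$ and let $m\ge1$ be an integer. Set $\mathcal{S}^m=\{P(x_1^m,\dots,x_n^m)\ :\ P\in\mathcal{S}\}$, and for a set $\mathcal{T}$ of polynomials write $\mathcal{T}^m$ likewise. Let $G(I)$ denote the unique reduced monic Gröbner basis of an ideal $I$ with respect to the lexicographic monomial order ($x^\nu>x^\mu$ iff the first non-zero entry of $\nu-\mu$ is positive). Then $$G(\langle\mathcal{S}^m\rangle)=G(\langle\mathcal{S}\rangle)^m,$$ where $\langle\cdot\rangle$ denotes the ideal generated. *)

theory Defs
  imports Complex_Main "HOL-Library.Poly_Mapping"
begin

text \<open>Multivariate polynomials over the rationals in the variables x_0, x_1, ...
  (the paper's x_1,...,x_n are x_0,...,x_(n-1) here).\<close>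

type_synonym monom = "nat \<Rightarrow>\<^sub>0 nat"
type_synonym qpoly = "monom \<Rightarrow>\<^sub>0 rat"

definition polys_in :: "nat \<Rightarrow> qpoly set" where
  "polys_in n = {p. \<forall>\<mu>\<in>Poly_Mapping.keys p. Poly_Mapping.keys \<mu> \<subseteq> {..<n}}"

definition gen_ideal :: "nat \<Rightarrow> qpoly set \<Rightarrow> qpoly set" where
  "gen_ideal n S = {p. \<exists>F c. finite F \<and> F \<subseteq> S \<and> (\<forall>s\<in>F. c s \<in> polys_in n)
                          \<and> p = (\<Sum>s\<in>F. c s * s)}"

definition lex_gt :: "monom \<Rightarrow> monom \<Rightarrow> bool" where
  "lex_gt \<nu> \<mu> \<longleftrightarrow> (\<exists>i. Poly_Mapping.lookup \<mu> i < Poly_Mapping.lookup \<nu> i \<and> (\<forall>j<i. Poly_Mapping.lookup \<nu> j = Poly_Mapping.lookup \<mu> j))"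

definition lm :: "qpoly \<Rightarrow> monom" where
  "lm p = (THE \<mu>. \<mu> \<in> Poly_Mapping.keys p \<and> (\<forall>\<nu>\<in>Poly_Mapping.keys p. \<nu> \<noteq> \<mu> \<longrightarrow> lex_gt \<mu> \<nu>))"

definition lc :: "qpoly \<Rightarrow> rat" where
  "lc p = Poly_Mapping.lookup p (lm p)"

definition mdvd :: "monom \<Rightarrow> monom \<Rightarrow> bool" where
  "mdvd \<mu> \<nu> \<longleftrightarrow> (\<forall>i. Poly_Mapping.lookup \<mu> i \<le> Poly_Mapping.lookup \<nu> i)"

definition is_groebner_basis :: "nat \<Rightarrow> qpoly set \<Rightarrow> qpoly set \<Rightarrow> bool" where
  "is_groebner_basis n I G \<longleftrightarrow> finite G \<and> G \<subseteq> I \<and> G \<subseteq> polys_in n \<and> 0 \<notin> G \<and>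
     (\<forall>p\<in>I. p \<noteq> 0 \<longrightarrow> (\<exists>g\<in>G. mdvd (lm g) (lm p)))"

definition is_reduced_gb :: "nat \<Rightarrow> qpoly set \<Rightarrow> qpoly set \<Rightarrow> bool" where
  "is_reduced_gb n I G \<longleftrightarrow> is_groebner_basis n I G \<and>
     (\<forall>g\<in>G. lc g = 1 \<and> (\<forall>\<mu>\<in>Poly_Mapping.keys g. \<forall>g'\<in>G - {g}. \<not> mdvd (lm g') \<mu>))"

definition reduced_gb :: "nat \<Rightarrow> qpoly set \<Rightarrow> qpoly set" where
  "reduced_gb n I = (THE G. is_reduced_gb n I G)"

definition pow_subst :: "nat \<Rightarrow> qpoly \<Rightarrow> qpoly" where
  "pow_subst m p = (\<Sum>\<mu>\<in>Poly_Mapping.keys p. Poly_Mapping.single (Poly_Mapping.map (\<lambda>k. m * k) \<mu>) (Poly_Mapping.lookup p \<mu>))"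

end

theory Submission
  imports Defs
begin

lemma lookup_map_pm: "f 0 = 0 \<Longrightarrow> Poly_Mapping.lookup (Poly_Mapping.map f p) k = f (Poly_Mapping.lookup p k)"
  by (simp add: Poly_Mapping.map.rep_eq when_def)

lemma lex_irrefl: "\<not> lex_gt a a"
  by (auto simp: lex_gt_def)

lemma lex_trans: "lex_gt a b \<Longrightarrow> lex_gt b c \<Longrightarrow> lex_gt a c"
  unfolding lex_gt_def
proof (elim exE conjE)
  fix i j
  assume 1: "Poly_Mapping.lookup b i < Poly_Mapping.lookup a i" "\<forall>k<i. Poly_Mapping.lookup a k = Poly_Mapping.lookup b k"
    and 2: "Poly_Mapping.lookup c j < Poly_Mapping.lookup b j" "\<forall>k<j. Poly_Mapping.lookup b k = Poly_Mapping.lookup c k"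
  show "\<exists>i. Poly_Mapping.lookup c i < Poly_Mapping.lookup a i \<and> (\<forall>j<i. Poly_Mapping.lookup a j = Poly_Mapping.lookup c j)"
  proof (cases "i \<le> j")
    case True
    have "Poly_Mapping.lookup c i < Poly_Mapping.lookup a i"
    proof (cases "i = j")
      case True then show ?thesis using 1 2 by simp
    next
      case False then have "i < j" using \<open>i \<le> j\<close> by simp
      then show ?thesis using 1 2 by simp
    qed
    moreover have "\<forall>k<i. Poly_Mapping.lookup a k = Poly_Mapping.lookup c k" using 1 2 \<open>i \<le> j\<close> by simp
    ultimately show ?thesis by blast
  next
    case False
    then show ?thesis using 1 2
      by (intro exI[of _ j]) auto
  qed
qed

lemma lex_asym: "lex_gt a b \<Longrightarrow> \<not> lex_gt b a"
  using lex_trans lex_irrefl by blast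

lemma lex_total: "a \<noteq> b \<Longrightarrow> lex_gt a b \<or> lex_gt b a"
proof -
  assume "a \<noteq> b"
  then obtain k where "Poly_Mapping.lookup a k \<noteq> Poly_Mapping.lookup b k"
    using poly_mapping_eqI by metis
  define i where "i = (LEAST k. Poly_Mapping.lookup a k \<noteq> Poly_Mapping.lookup b k)"
  have ne: "Poly_Mapping.lookup a i \<noteq> Poly_Mapping.lookup b i"
    unfolding i_def by (rule LeastI) fact
  have eq: "\<forall>j<i. Poly_Mapping.lookup a j = Poly_Mapping.lookup b j"
  proof (intro allI impI)
    fix j assume "j < i"
    then show "Poly_Mapping.lookup a j = Poly_Mapping.lookup b j"
      unfolding i_def using not_less_Least by blast
  qed
  show ?thesis
  proof (cases "Poly_Mapping.lookup a i < Poly_Mapping.lookup b i")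
    case True
    then have "lex_gt b a" unfolding lex_gt_def using eq by (intro exI[of _ i]) simp
    then show ?thesis ..
  next
    case False
    then have "Poly_Mapping.lookup b i < Poly_Mapping.lookup a i" using ne by simp
    then have "lex_gt a b" unfolding lex_gt_def using eq by (intro exI[of _ i]) simp
    then show ?thesis ..
  qed
qed

lemma lex_add: "lex_gt a b \<Longrightarrow> lex_gt (a + c) (b + c)"
  unfolding lex_gt_def
proof (elim exE)
  fix i assume "Poly_Mapping.lookup b i < Poly_Mapping.lookup a i \<and> (\<forall>j<i. Poly_Mapping.lookup a j = Poly_Mapping.lookup b j)"
  then show "\<exists>i. Poly_Mapping.lookup (b + c) i < Poly_Mapping.lookup (a + c) i \<and> (\<forall>j<i. Poly_Mapping.lookup (a + c) j = Poly_Mapping.lookup (b + c) j)"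
    by (intro exI[of _ i]) (auto simp: lookup_add)
qed

lemma mdvd_lex: "mdvd a b \<Longrightarrow> a \<noteq> b \<Longrightarrow> lex_gt b a"
proof -
  assume d: "mdvd a b" and "a \<noteq> b"
  then have "lex_gt a b \<or> lex_gt b a" using lex_total by blast
  moreover have "\<not> lex_gt a b"
    using d unfolding lex_gt_def mdvd_def using leD by blast
  ultimately show ?thesis by blast
qed

lemma mdvd_refl: "mdvd a a" by (simp add: mdvd_def)
lemma mdvd_trans: "mdvd a b \<Longrightarrow> mdvd b c \<Longrightarrow> mdvd a c"
  unfolding mdvd_def
proof (intro allI)
  fix i assume "\<forall>i. Poly_Mapping.lookup a i \<le> Poly_Mapping.lookup b i" "\<forall>i. Poly_Mapping.lookup b i \<le> Poly_Mapping.lookup c i"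
  then have "Poly_Mapping.lookup a i \<le> Poly_Mapping.lookup b i" "Poly_Mapping.lookup b i \<le> Poly_Mapping.lookup c i" by auto
  then show "Poly_Mapping.lookup a i \<le> Poly_Mapping.lookup c i" by linarith
qed
lemma mdvd_antisym: "mdvd a b \<Longrightarrow> mdvd b a \<Longrightarrow> a = b"
  unfolding mdvd_def by (intro poly_mapping_eqI) (simp add: order_antisym)

lemma finite_max_ex:
  fixes A :: "monom set"
  assumes "finite A" "A \<noteq> {}"
  shows "\<exists>x\<in>A. \<forall>y\<in>A. y \<noteq> x \<longrightarrow> lex_gt x y"
  using assms
proof (induction rule: finite_ne_induct)
  case (singleton x) then show ?case by auto
next
  case (insert x F)
  then obtain z where z: "z \<in> F" "\<forall>y\<in>F. y \<noteq> z \<longrightarrow> lex_gt z y" by blast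
  show ?case
  proof (cases "lex_gt x z")
    case True
    have "\<forall>y\<in>insert x F. y \<noteq> x \<longrightarrow> lex_gt x y"
    proof
      fix y assume "y \<in> insert x F"
      show "y \<noteq> x \<longrightarrow> lex_gt x y"
      proof (cases "y = z")
        case True then show ?thesis using \<open>lex_gt x z\<close> by simp
      next
        case False then show ?thesis using z \<open>y \<in> insert x F\<close> \<open>lex_gt x z\<close> lex_trans by blast
      qed
    qed
    then show ?thesis by blast
  next
    case False
    then have "z \<noteq> x \<longrightarrow> lex_gt z x" using lex_total by blast
    then show ?thesis using z by blast
  qed
qed

lemma lm_prop:
  assumes "p \<noteq> 0"
  shows "lm p \<in> Poly_Mapping.keys p \<and> (\<forall>\<nu>\<in>Poly_Mapping.keys p. \<nu> \<noteq> lm p \<longrightarrow> lex_gt (lm p) \<nu>)"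
proof -
  obtain x where x: "x \<in> Poly_Mapping.keys p" "\<forall>y\<in>Poly_Mapping.keys p. y \<noteq> x \<longrightarrow> lex_gt x y"
    using finite_max_ex[of "Poly_Mapping.keys p"] assms by auto
  have u: "\<exists>!\<mu>. \<mu> \<in> Poly_Mapping.keys p \<and> (\<forall>\<nu>\<in>Poly_Mapping.keys p. \<nu> \<noteq> \<mu> \<longrightarrow> lex_gt \<mu> \<nu>)"
  proof (rule ex1I[of _ x])
    show "x \<in> Poly_Mapping.keys p \<and> (\<forall>\<nu>\<in>Poly_Mapping.keys p. \<nu> \<noteq> x \<longrightarrow> lex_gt x \<nu>)" using x by simp
  next
    fix y assume y: "y \<in> Poly_Mapping.keys p \<and> (\<forall>\<nu>\<in>Poly_Mapping.keys p. \<nu> \<noteq> y \<longrightarrow> lex_gt y \<nu>)"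
    show "y = x"
    proof (rule ccontr)
      assume "y \<noteq> x"
      then have "lex_gt y x" "lex_gt x y" using x y by auto
      then show False using lex_asym by metis
    qed
  qed
  show ?thesis using theI'[OF u] unfolding lm_def .
qed

lemma lm_in: assumes "p \<noteq> 0" shows "lm p \<in> Poly_Mapping.keys p"
  using lm_prop[OF assms] by (rule conjunct1)
lemma lm_max: assumes "p \<noteq> 0" "\<nu> \<in> Poly_Mapping.keys p" "\<nu> \<noteq> lm p" shows "lex_gt (lm p) \<nu>"
proof -
  have "\<forall>\<nu>\<in>Poly_Mapping.keys p. \<nu> \<noteq> lm p \<longrightarrow> lex_gt (lm p) \<nu>" using lm_prop[OF assms(1)] by (rule conjunct2)
  then show ?thesis using assms(2,3) by simp
qed
lemma lm_eqI:
  assumes a: "\<mu> \<in> Poly_Mapping.keys p" and b: "\<And>\<nu>. \<nu> \<in> Poly_Mapping.keys p \<Longrightarrow> \<nu> \<noteq> \<mu> \<Longrightarrow> lex_gt \<mu> \<nu>"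
  shows "lm p = \<mu>"
proof (rule ccontr)
  assume ne: "lm p \<noteq> \<mu>"
  have "p \<noteq> 0" using a by auto
  then have "lm p \<in> Poly_Mapping.keys p" by (rule lm_in)
  then have "lex_gt \<mu> (lm p)" using b ne by simp
  moreover have "lex_gt (lm p) \<mu>" using lm_max[OF \<open>p \<noteq> 0\<close> a] ne by simp
  ultimately show False using lex_asym by metis
qed
lemma lc_nz: assumes "p \<noteq> 0" shows "lc p \<noteq> 0"
  unfolding lc_def using lm_in[OF assms] by (simp add: in_keys_iff)

lemma nat_seq_mono_sub:
  fixes a :: "nat \<Rightarrow> nat"
  shows "\<exists>h. strict_mono h \<and> (\<forall>i j::nat. i \<le> j \<longrightarrow> a (h i) \<le> a (h j))"
proof -
  obtain f where f: "strict_mono f" "monoseq (\<lambda>n. a (f n))" using seq_monosub by blast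
  show ?thesis
  proof (cases "\<forall>m. \<forall>n\<ge>m. a (f m) \<le> a (f n)")
    case True then show ?thesis using f(1) by (intro exI[of _ f]) simp
  next
    case False
    then have dec: "\<forall>m. \<forall>n\<ge>m. a (f n) \<le> a (f m)" using f(2) unfolding monoseq_def by blast
    obtain N where N: "\<forall>k. a (f N) \<le> a (f k)"
      using ex_has_least_nat[of "\<lambda>_. True" 0 "\<lambda>k. a (f k)"] by blast
    define h where "h i = f (i + N)" for i
    have "strict_mono h" using f(1) unfolding h_def strict_mono_def by simp
    moreover have "\<forall>i j::nat. i \<le> j \<longrightarrow> a (h i) \<le> a (h j)"
    proof (intro allI impI)
      fix i j :: nat assume "i \<le> j"
      have "a (h i) \<le> a (f N)" unfolding h_def using dec by simp
      also have "\<dots> \<le> a (h j)" using N unfolding h_def by simp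
      finally show "a (h i) \<le> a (h j)" .
    qed
    ultimately show ?thesis by (intro exI[of _ h]) simp
  qed
qed

lemma dickson_sub:
  fixes f :: "nat \<Rightarrow> monom"
  shows "\<exists>h. strict_mono h \<and> (\<forall>k<n. \<forall>i j::nat. i \<le> j \<longrightarrow> Poly_Mapping.lookup (f (h i)) k \<le> Poly_Mapping.lookup (f (h j)) k)"
proof (induction n)
  case 0
  show ?case by (rule exI[of _ id]) (simp add: strict_mono_def)
next
  case (Suc n)
  then obtain h where h: "strict_mono h" "\<forall>k<n. \<forall>i j::nat. i \<le> j \<longrightarrow> Poly_Mapping.lookup (f (h i)) k \<le> Poly_Mapping.lookup (f (h j)) k"
    by blast
  obtain h2 where h2: "strict_mono h2" "\<forall>i j::nat. i \<le> j \<longrightarrow> Poly_Mapping.lookup (f (h (h2 i))) n \<le> Poly_Mapping.lookup (f (h (h2 j))) n"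
    using nat_seq_mono_sub[of "\<lambda>i. Poly_Mapping.lookup (f (h i)) n"] by blast
  have sm: "strict_mono (\<lambda>i. h (h2 i))" using h(1) h2(1) unfolding strict_mono_def by simp
  have m2: "i \<le> j \<Longrightarrow> h2 i \<le> h2 j" for i j using h2(1) strict_mono_mono monoD by metis
  have "\<forall>k<Suc n. \<forall>i j::nat. i \<le> j \<longrightarrow> Poly_Mapping.lookup (f (h (h2 i))) k \<le> Poly_Mapping.lookup (f (h (h2 j))) k"
  proof (intro allI impI)
    fix k i j :: nat assume k: "k < Suc n" and ij: "i \<le> j"
    show "Poly_Mapping.lookup (f (h (h2 i))) k \<le> Poly_Mapping.lookup (f (h (h2 j))) k"
    proof (cases "k = n")
      case True then show ?thesis using h2(2) ij by simp
    next
      case False then have "k < n" using k by simp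
      then show ?thesis using h(2) m2[OF ij] by simp
    qed
  qed
  then show ?case using sm by (intro exI[of _ "\<lambda>i. h (h2 i)"]) simp
qed

lemma dickson:
  fixes f :: "nat \<Rightarrow> monom"
  assumes "\<And>i. Poly_Mapping.keys (f i) \<subseteq> {..<n}"
  shows "\<exists>i j. i < j \<and> mdvd (f i) (f j)"
proof -
  obtain h where h: "strict_mono h" "\<forall>k<n. \<forall>i j::nat. i \<le> j \<longrightarrow> Poly_Mapping.lookup (f (h i)) k \<le> Poly_Mapping.lookup (f (h j)) k"
    using dickson_sub by blast
  have "mdvd (f (h 0)) (f (h 1))"
    unfolding mdvd_def
  proof
    fix k
    show "Poly_Mapping.lookup (f (h 0)) k \<le> Poly_Mapping.lookup (f (h 1)) k"
    proof (cases "k < n")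
      case True then show ?thesis using h(2) by simp
    next
      case False
      then have "k \<notin> Poly_Mapping.keys (f (h 0))" using assms[of "h 0"] by auto
      then show ?thesis by (simp add: in_keys_iff)
    qed
  qed
  moreover have "h 0 < h 1" using h(1) unfolding strict_mono_def by simp
  ultimately show ?thesis by (intro exI[of _ "h 0"] exI[of _ "h 1"]) simp
qed

definition lexR :: "nat \<Rightarrow> (monom \<times> monom) set" where
  "lexR n = {(x, y). lex_gt y x \<and> Poly_Mapping.keys x \<subseteq> {..<n} \<and> Poly_Mapping.keys y \<subseteq> {..<n}}"

lemma wf_lexR: "wf (lexR n)"
  unfolding wf_iff_no_infinite_down_chain
proof
  assume "\<exists>f. \<forall>i. (f (Suc i), f i) \<in> lexR n"
  then obtain f where f: "\<forall>i. (f (Suc i), f i) \<in> lexR n" by blast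
  then have keys: "Poly_Mapping.keys (f i) \<subseteq> {..<n}" for i unfolding lexR_def by auto
  have step: "lex_gt (f i) (f (Suc i))" for i using f unfolding lexR_def by auto
  have chain: "lex_gt (f i) (f j)" if "i < j" for i j
    using that
  proof (induction j)
    case 0 then show ?case by simp
  next
    case (Suc j)
    show ?case
    proof (cases "i = j")
      case True then show ?thesis using step by simp
    next
      case False then have "i < j" using Suc.prems by simp
      then have "lex_gt (f i) (f j)" by (rule Suc.IH)
      then show ?thesis using step lex_trans by metis
    qed
  qed
  obtain i j where ij: "i < j" "mdvd (f i) (f j)" using dickson[of f n] keys by blast
  have g: "lex_gt (f i) (f j)" using chain[OF ij(1)] .
  show False
  proof (cases "f i = f j")
    case True then show False using g lex_irrefl by metis
  next
    case False then have "lex_gt (f j) (f i)" using mdvd_lex ij(2) by metis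
    then show False using g lex_asym by metis
  qed
qed

definition minL :: "monom set \<Rightarrow> monom set" where
  "minL L = {\<mu>\<in>L. \<forall>\<nu>\<in>L. mdvd \<nu> \<mu> \<longrightarrow> \<nu> = \<mu>}"

lemma finite_minL:
  assumes "\<And>\<mu>. \<mu> \<in> L \<Longrightarrow> Poly_Mapping.keys \<mu> \<subseteq> {..<n}"
  shows "finite (minL L)"
proof (rule ccontr)
  assume "infinite (minL L)"
  then obtain f :: "nat \<Rightarrow> monom" where f: "inj f" "range f \<subseteq> minL L"
    using infinite_iff_countable_subset by metis
  have fL: "f i \<in> minL L" for i using f(2) by auto
  then have "f i \<in> L" for i unfolding minL_def by simp
  then have "Poly_Mapping.keys (f i) \<subseteq> {..<n}" for i using assms by simp
  then obtain i j where ij: "i < j" "mdvd (f i) (f j)" using dickson[of f n] by blast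
  have "f i = f j" using fL[of j] \<open>f i \<in> L\<close> ij(2) unfolding minL_def by simp
  then have "i = j" using f(1) by (simp add: inj_eq)
  then show False using ij by simp
qed

lemma minL_below:
  assumes "\<And>\<mu>. \<mu> \<in> L \<Longrightarrow> Poly_Mapping.keys \<mu> \<subseteq> {..<n}"
  shows "\<mu> \<in> L \<Longrightarrow> \<exists>\<nu>\<in>minL L. mdvd \<nu> \<mu>"
proof (induction \<mu> rule: wf_induct[OF wf_lexR[of n]])
  case (1 \<mu>)
  show ?case
  proof (cases "\<mu> \<in> minL L")
    case True then show ?thesis using mdvd_refl by blast
  next
    case False
    then obtain \<nu> where \<nu>: "\<nu> \<in> L" "mdvd \<nu> \<mu>" "\<nu> \<noteq> \<mu>" using 1(2) unfolding minL_def by blast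
    then have "lex_gt \<mu> \<nu>" using mdvd_lex by metis
    then have "(\<nu>, \<mu>) \<in> lexR n" unfolding lexR_def using assms \<nu>(1) 1(2) by simp
    then obtain \<kappa> where "\<kappa> \<in> minL L" "mdvd \<kappa> \<nu>" using 1(1) \<nu>(1) by blast
    then show ?thesis using \<nu>(2) mdvd_trans by metis
  qed
qed

lemma polys_in_iff: "p \<in> polys_in n \<longleftrightarrow> (\<forall>\<mu>\<in>Poly_Mapping.keys p. Poly_Mapping.keys \<mu> \<subseteq> {..<n})"
  unfolding polys_in_def by simp

lemma polys_in_0: "0 \<in> polys_in n"
  unfolding polys_in_iff by simp

lemma polys_in_1: "1 \<in> polys_in n"
  unfolding polys_in_iff by simp

lemma polys_in_single: "Poly_Mapping.keys \<mu> \<subseteq> {..<n} \<Longrightarrow> Poly_Mapping.single \<mu> c \<in> polys_in n"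
  unfolding polys_in_iff by simp

lemma polys_in_add: "p \<in> polys_in n \<Longrightarrow> q \<in> polys_in n \<Longrightarrow> p + q \<in> polys_in n"
  unfolding polys_in_iff using keys_add[of p q] by blast

lemma polys_in_uminus: "p \<in> polys_in n \<Longrightarrow> - p \<in> polys_in n"
  unfolding polys_in_iff by simp

lemma polys_in_diff: "p \<in> polys_in n \<Longrightarrow> q \<in> polys_in n \<Longrightarrow> p - q \<in> polys_in n"
  unfolding polys_in_iff using keys_diff[of p q] by blast

lemma keys_monom_add: "Poly_Mapping.keys ((a::monom) + b) = Poly_Mapping.keys a \<union> Poly_Mapping.keys b"
  by (auto simp: in_keys_iff lookup_add)

lemma polys_in_mult: "p \<in> polys_in n \<Longrightarrow> q \<in> polys_in n \<Longrightarrow> p * q \<in> polys_in n"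
  unfolding polys_in_iff
proof
  fix \<mu> assume p: "\<forall>\<mu>\<in>Poly_Mapping.keys p. Poly_Mapping.keys \<mu> \<subseteq> {..<n}"
    and q: "\<forall>\<mu>\<in>Poly_Mapping.keys q. Poly_Mapping.keys \<mu> \<subseteq> {..<n}"
    and m: "\<mu> \<in> Poly_Mapping.keys (p * q)"
  then obtain a b where "\<mu> = a + b" "a \<in> Poly_Mapping.keys p" "b \<in> Poly_Mapping.keys q"
    using keys_mult[of p q] by blast
  then show "Poly_Mapping.keys \<mu> \<subseteq> {..<n}" using p q keys_monom_add by simp
qed

lemma polys_in_sum: "finite A \<Longrightarrow> (\<And>x. x \<in> A \<Longrightarrow> f x \<in> polys_in n) \<Longrightarrow> sum f A \<in> polys_in n"
  by (induction A rule: finite_induct) (simp_all add: polys_in_0 polys_in_add)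

lemma gen_ideal_0: "0 \<in> gen_ideal n S"
  unfolding gen_ideal_def by (rule CollectI, rule exI[of _ "{}"]) simp

lemma gen_ideal_base: "s \<in> S \<Longrightarrow> s \<in> gen_ideal n S"
  unfolding gen_ideal_def
  apply (rule CollectI, rule exI[of _ "{s}"], rule exI[of _ "\<lambda>_. 1"])
  by (simp add: polys_in_1)

lemma gen_idealI:
  assumes "finite F" "F \<subseteq> S" "\<forall>s\<in>F. c s \<in> polys_in n" "p = (\<Sum>s\<in>F. c s * s)"
  shows "p \<in> gen_ideal n S"
  unfolding gen_ideal_def
  by (rule CollectI, rule exI, rule exI, intro conjI, rule assms(1), rule assms(2), rule assms(3), rule assms(4))

lemma gen_ideal_add:
  assumes "p \<in> gen_ideal n S" "q \<in> gen_ideal n S"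
  shows "p + q \<in> gen_ideal n S"
proof -
  obtain F c where F: "finite F" "F \<subseteq> S" "\<forall>s\<in>F. c s \<in> polys_in n" "p = (\<Sum>s\<in>F. c s * s)"
    using assms(1) unfolding gen_ideal_def by blast
  obtain F' d where F': "finite F'" "F' \<subseteq> S" "\<forall>s\<in>F'. d s \<in> polys_in n" "q = (\<Sum>s\<in>F'. d s * s)"
    using assms(2) unfolding gen_ideal_def by blast
  define e where "e s = (if s \<in> F then c s else 0) + (if s \<in> F' then d s else 0)" for s
  have fin: "finite (F \<union> F')" using F F' by simp
  have "(\<Sum>s\<in>F \<union> F'. e s * s) = (\<Sum>s\<in>F \<union> F'. (if s \<in> F then c s * s else 0)) + (\<Sum>s\<in>F \<union> F'. (if s \<in> F' then d s * s else 0))"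
  proof -
    have "e s * s = (if s \<in> F then c s * s else 0) + (if s \<in> F' then d s * s else 0)" for s
      unfolding e_def by (simp add: distrib_right)
    then show ?thesis by (simp add: sum.distrib)
  qed
  also have "(\<Sum>s\<in>F \<union> F'. (if s \<in> F then c s * s else 0)) = (\<Sum>s\<in>F. c s * s)"
  proof -
    have "{s \<in> F \<union> F'. s \<in> F} = F" by blast
    then show ?thesis using sum.inter_filter[OF fin, of "\<lambda>s. c s * s" "\<lambda>s. s \<in> F"] by simp
  qed
  also have "(\<Sum>s\<in>F \<union> F'. (if s \<in> F' then d s * s else 0)) = (\<Sum>s\<in>F'. d s * s)"
  proof -
    have "{s \<in> F \<union> F'. s \<in> F'} = F'" by blast
    then show ?thesis using sum.inter_filter[OF fin, of "\<lambda>s. d s * s" "\<lambda>s. s \<in> F'"] by simp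
  qed
  finally have eq: "p + q = (\<Sum>s\<in>F \<union> F'. e s * s)" using F F' by simp
  have "\<forall>s\<in>F \<union> F'. e s \<in> polys_in n"
    unfolding e_def using F(3) F'(3) by (auto intro!: polys_in_add simp: polys_in_0)
  moreover have "F \<union> F' \<subseteq> S" using F(2) F'(2) by simp
  ultimately show ?thesis using eq fin by (intro gen_idealI)
qed

lemma gen_ideal_mult:
  assumes "p \<in> gen_ideal n S" "r \<in> polys_in n"
  shows "r * p \<in> gen_ideal n S"
proof -
  obtain F c where F: "finite F" "F \<subseteq> S" "\<forall>s\<in>F. c s \<in> polys_in n" "p = (\<Sum>s\<in>F. c s * s)"
    using assms(1) unfolding gen_ideal_def by blast
  have eq: "r * p = (\<Sum>s\<in>F. (r * c s) * s)" using F(4) by (simp add: sum_distrib_left mult.assoc)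
  have "\<forall>s\<in>F. r * c s \<in> polys_in n" using F(3) assms(2) polys_in_mult by blast
  then show ?thesis using eq F(1,2) by (intro gen_idealI)
qed

lemma gen_ideal_diff:
  assumes "p \<in> gen_ideal n S" "q \<in> gen_ideal n S"
  shows "p - q \<in> gen_ideal n S"
proof -
  have "(- 1) * q \<in> gen_ideal n S" using gen_ideal_mult[OF assms(2) polys_in_uminus[OF polys_in_1]] .
  then have "- q \<in> gen_ideal n S" by simp
  then have "p + (- q) \<in> gen_ideal n S" using gen_ideal_add assms(1) by blast
  then show ?thesis by simp
qed

lemma gen_ideal_sub:
  assumes "S \<subseteq> polys_in n"
  shows "gen_ideal n S \<subseteq> polys_in n"
proof
  fix p assume "p \<in> gen_ideal n S"
  then obtain F c where F: "finite F" "F \<subseteq> S" "\<forall>s\<in>F. c s \<in> polys_in n" "p = (\<Sum>s\<in>F. c s * s)"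
    unfolding gen_ideal_def by blast
  show "p \<in> polys_in n" unfolding F(4)
    using F assms by (intro polys_in_sum polys_in_mult) auto
qed

lemma poly_decomp: "p = (\<Sum>\<mu>\<in>Poly_Mapping.keys p. Poly_Mapping.single \<mu> (Poly_Mapping.lookup p \<mu>))"
proof (rule poly_mapping_eqI)
  fix x
  have "Poly_Mapping.lookup (\<Sum>\<mu>\<in>Poly_Mapping.keys p. Poly_Mapping.single \<mu> (Poly_Mapping.lookup p \<mu>)) x
      = (\<Sum>\<mu>\<in>Poly_Mapping.keys p. if \<mu> = x then Poly_Mapping.lookup p \<mu> else 0)"
    by (simp add: lookup_sum lookup_single when_def)
  also have "\<dots> = Poly_Mapping.lookup p x"
    by (simp add: sum.delta in_keys_iff)
  finally show "Poly_Mapping.lookup p x = Poly_Mapping.lookup (\<Sum>\<mu>\<in>Poly_Mapping.keys p. Poly_Mapping.single \<mu> (Poly_Mapping.lookup p \<mu>)) x" by simp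
qed

lemma lookup_sum_single_in:
  assumes "finite A" "inj_on f A" "\<nu> \<in> A"
  shows "Poly_Mapping.lookup (\<Sum>\<mu>\<in>A. Poly_Mapping.single (f \<mu>) (h \<mu>)) (f \<nu>) = h \<nu>"
proof -
  have "Poly_Mapping.lookup (\<Sum>\<mu>\<in>A. Poly_Mapping.single (f \<mu>) (h \<mu>)) (f \<nu>) = (\<Sum>\<mu>\<in>A. if \<mu> = \<nu> then h \<mu> else 0)"
    unfolding lookup_sum
  proof (rule sum.cong)
    fix \<mu> assume "\<mu> \<in> A"
    then have "f \<mu> = f \<nu> \<longleftrightarrow> \<mu> = \<nu>" using assms(2,3) by (meson inj_on_eq_iff)
    then show "Poly_Mapping.lookup (Poly_Mapping.single (f \<mu>) (h \<mu>)) (f \<nu>) = (if \<mu> = \<nu> then h \<mu> else 0)"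
      by (simp add: lookup_single when_def)
  qed simp
  also have "\<dots> = h \<nu>" using assms(1,3) by (simp add: sum.delta)
  finally show ?thesis .
qed

lemma lookup_sum_single_notin:
  assumes "x \<notin> f ` A"
  shows "Poly_Mapping.lookup (\<Sum>\<mu>\<in>A. Poly_Mapping.single (f \<mu>) (h \<mu>)) x = 0"
  unfolding lookup_sum
proof (rule sum.neutral, rule ballI)
  fix \<mu> assume "\<mu> \<in> A"
  then have "f \<mu> \<noteq> x" using assms by blast
  then show "Poly_Mapping.lookup (Poly_Mapping.single (f \<mu>) (h \<mu>)) x = 0" by (simp add: lookup_single when_def)
qed

lemma single_mult_decomp:
  "Poly_Mapping.single \<beta> c * g = (\<Sum>\<nu>\<in>Poly_Mapping.keys g. Poly_Mapping.single (\<beta> + \<nu>) (c * Poly_Mapping.lookup g \<nu>))"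
proof -
  have "Poly_Mapping.single \<beta> c * g = Poly_Mapping.single \<beta> c * (\<Sum>\<nu>\<in>Poly_Mapping.keys g. Poly_Mapping.single \<nu> (Poly_Mapping.lookup g \<nu>))"
    by (subst poly_decomp[of g]) (rule refl)
  also have "\<dots> = (\<Sum>\<nu>\<in>Poly_Mapping.keys g. Poly_Mapping.single (\<beta> + \<nu>) (c * Poly_Mapping.lookup g \<nu>))"
    by (simp add: sum_distrib_left mult_single)
  finally show ?thesis .
qed

lemma lookup_single_mult:
  fixes g :: qpoly
  shows "Poly_Mapping.lookup (Poly_Mapping.single \<beta> c * g) (\<beta> + \<nu>) = c * Poly_Mapping.lookup g \<nu>"
proof (cases "\<nu> \<in> Poly_Mapping.keys g")
  case True
  have "inj_on ((+) \<beta>) (Poly_Mapping.keys g)" by (simp add: inj_on_def)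
  then show ?thesis unfolding single_mult_decomp
    using lookup_sum_single_in[of "Poly_Mapping.keys g" "(+) \<beta>" \<nu> "\<lambda>\<nu>. c * Poly_Mapping.lookup g \<nu>"] True by simp
next
  case False
  have "\<beta> + \<nu> \<notin> (+) \<beta> ` Poly_Mapping.keys g" using False by auto
  then show ?thesis unfolding single_mult_decomp
    using lookup_sum_single_notin[of "\<beta> + \<nu>" "(+) \<beta>" "Poly_Mapping.keys g" "\<lambda>\<nu>. c * Poly_Mapping.lookup g \<nu>"] False
    by (simp add: in_keys_iff)
qed

lemma keys_single_mult:
  fixes g :: qpoly
  shows "x \<in> Poly_Mapping.keys (Poly_Mapping.single \<beta> c * g) \<Longrightarrow> \<exists>\<nu>\<in>Poly_Mapping.keys g. x = \<beta> + \<nu>"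
proof -
  assume "x \<in> Poly_Mapping.keys (Poly_Mapping.single \<beta> c * g)"
  then obtain a b where "x = a + b" "a \<in> Poly_Mapping.keys (Poly_Mapping.single \<beta> c)" "b \<in> Poly_Mapping.keys g"
    using keys_mult[of "Poly_Mapping.single \<beta> c" g] by blast
  moreover have "a = \<beta>" using calculation(2) by (simp split: if_splits)
  ultimately show ?thesis by blast
qed

lemma lookup_scale: "Poly_Mapping.lookup (Poly_Mapping.single 0 c * (p::qpoly)) x = c * Poly_Mapping.lookup p x"
  using lookup_single_mult[of 0 c p x] by simp

lemma keys_scale: "(c::rat) \<noteq> 0 \<Longrightarrow> Poly_Mapping.keys (Poly_Mapping.single 0 c * (p::qpoly)) = Poly_Mapping.keys p"
  by (auto simp: in_keys_iff lookup_scale)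

lemma lm_keys_eq: "Poly_Mapping.keys p = Poly_Mapping.keys q \<Longrightarrow> lm p = lm q"
  unfolding lm_def by simp

lemma keys_monom_diff:
  "Poly_Mapping.keys ((a::monom) - b) \<subseteq> Poly_Mapping.keys a"
  by (auto simp: in_keys_iff lookup_minus)

lemma mdvd_diff_add: "mdvd \<kappa> \<beta> \<Longrightarrow> (\<beta> - \<kappa>) + \<kappa> = \<beta>"
  unfolding mdvd_def by (intro poly_mapping_eqI) (simp add: lookup_add lookup_minus)

definition LMs :: "qpoly set \<Rightarrow> monom set" where
  "LMs I = {lm p | p. p \<in> I \<and> p \<noteq> 0}"

lemma polys_in_keys: "p \<in> polys_in n \<Longrightarrow> x \<in> Poly_Mapping.keys p \<Longrightarrow> Poly_Mapping.keys x \<subseteq> {..<n}"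
  unfolding polys_in_iff by blast

context
  fixes n :: nat and S :: "qpoly set"
  assumes S: "S \<subseteq> polys_in n"
begin

lemma I_polys: "p \<in> gen_ideal n S \<Longrightarrow> p \<in> polys_in n"
  using gen_ideal_sub[OF S] by blast

lemma LMs_keys: "\<kappa> \<in> LMs (gen_ideal n S) \<Longrightarrow> Poly_Mapping.keys \<kappa> \<subseteq> {..<n}"
proof -
  assume "\<kappa> \<in> LMs (gen_ideal n S)"
  then obtain p where p: "\<kappa> = lm p" "p \<in> gen_ideal n S" "p \<noteq> 0" unfolding LMs_def by blast
  show ?thesis using polys_in_keys[OF I_polys[OF p(2)] lm_in[OF p(3)]] p(1) by simp
qed

lemma monic_exists:
  assumes "p \<in> gen_ideal n S" "p \<noteq> 0"
  shows "\<exists>q. q \<in> gen_ideal n S \<and> q \<noteq> 0 \<and> lm q = lm p \<and> lc q = 1"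
proof -
  define c where "c = 1 / lc p"
  have c0: "c \<noteq> 0" unfolding c_def using lc_nz[OF assms(2)] by simp
  define q where "q = Poly_Mapping.single 0 c * p"
  have k: "Poly_Mapping.keys q = Poly_Mapping.keys p" unfolding q_def using keys_scale[OF c0] .
  have qI: "q \<in> gen_ideal n S" unfolding q_def
    by (rule gen_ideal_mult[OF assms(1)]) (rule polys_in_single, simp)
  have q0: "q \<noteq> 0" using k assms(2) by (metis keys_eq_empty)
  have lm: "lm q = lm p" using lm_keys_eq[OF k] .
  have "lc q = Poly_Mapping.lookup q (lm p)" unfolding lc_def lm ..
  also have "\<dots> = c * lc p" unfolding lc_def q_def lookup_scale ..
  also have "\<dots> = 1" unfolding c_def using lc_nz[OF assms(2)] by simp
  finally show ?thesis using qI q0 lm by blast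
qed

lemma red_step:
  assumes p: "p \<in> gen_ideal n S" "p \<noteq> 0" "lm p = \<mu>" "lc p = 1"
    and b: "\<beta> \<in> Poly_Mapping.keys p" "\<beta> \<noteq> \<mu>"
    and g: "g \<in> gen_ideal n S" "g \<noteq> 0" "lc g = 1" "mdvd (lm g) \<beta>"
  shows "\<exists>p'. p' \<in> gen_ideal n S \<and> p' \<noteq> 0 \<and> lm p' = \<mu> \<and> lc p' = 1 \<and> Poly_Mapping.lookup p' \<beta> = 0
          \<and> (\<forall>x\<in>Poly_Mapping.keys p'. x \<in> Poly_Mapping.keys p \<or> lex_gt \<beta> x)"
proof -
  define c where "c = Poly_Mapping.lookup p \<beta>"
  define h where "h = Poly_Mapping.single (\<beta> - lm g) c * g"
  define p' where "p' = p - h"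
  have bkeys: "Poly_Mapping.keys \<beta> \<subseteq> {..<n}" using polys_in_keys[OF I_polys[OF p(1)] b(1)] .
  have hI: "h \<in> gen_ideal n S" unfolding h_def
    by (rule gen_ideal_mult[OF g(1)], rule polys_in_single) (use keys_monom_diff[of \<beta> "lm g"] bkeys in blast)
  have p'I: "p' \<in> gen_ideal n S" unfolding p'_def using gen_ideal_diff[OF p(1) hI] .
  have hb: "Poly_Mapping.lookup h \<beta> = c"
  proof -
    have "Poly_Mapping.lookup h ((\<beta> - lm g) + lm g) = c * Poly_Mapping.lookup g (lm g)"
      unfolding h_def by (rule lookup_single_mult)
    then show ?thesis using g(3) mdvd_diff_add[OF g(4)] unfolding lc_def by simp
  qed
  have hkeys: "x = \<beta> \<or> lex_gt \<beta> x" if xh: "x \<in> Poly_Mapping.keys h" for x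
  proof -
    obtain \<nu> where \<nu>: "\<nu> \<in> Poly_Mapping.keys g" "x = (\<beta> - lm g) + \<nu>"
      using keys_single_mult[of x "\<beta> - lm g" c g] xh unfolding h_def by blast
    show ?thesis
    proof (cases "\<nu> = lm g")
      case True then show ?thesis using \<nu>(2) mdvd_diff_add[OF g(4)] by simp
    next
      case False
      then have "lex_gt (lm g) \<nu>" using lm_max[OF g(2) \<nu>(1)] by simp
      then have "lex_gt (lm g + (\<beta> - lm g)) (\<nu> + (\<beta> - lm g))" by (rule lex_add)
      then have "lex_gt \<beta> x" using \<nu>(2) mdvd_diff_add[OF g(4)] by (simp add: add.commute)
      then show ?thesis by simp
    qed
  qed
  have mub: "lex_gt \<mu> \<beta>" using lm_max[OF p(2) b(1)] b(2) p(3) by simp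
  have muh: "\<mu> \<notin> Poly_Mapping.keys h"
  proof
    assume "\<mu> \<in> Poly_Mapping.keys h"
    then have "\<mu> = \<beta> \<or> lex_gt \<beta> \<mu>" by (rule hkeys)
    then show False using b(2) mub lex_asym by metis
  qed
  have lp'b: "Poly_Mapping.lookup p' \<beta> = 0" unfolding p'_def lookup_minus hb c_def by simp
  have lp'mu: "Poly_Mapping.lookup p' \<mu> = 1"
  proof -
    have "Poly_Mapping.lookup h \<mu> = 0" using muh by (simp add: in_keys_iff)
    then show ?thesis unfolding p'_def lookup_minus using p(3,4) unfolding lc_def by simp
  qed
  then have mup': "\<mu> \<in> Poly_Mapping.keys p'" by (simp add: in_keys_iff)
  have kp': "x \<in> Poly_Mapping.keys p \<or> lex_gt \<beta> x" if "x \<in> Poly_Mapping.keys p'" for x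
  proof -
    have "x \<in> Poly_Mapping.keys p \<or> x \<in> Poly_Mapping.keys h"
      using that keys_diff[of p h] unfolding p'_def by blast
    then show ?thesis
    proof
      assume "x \<in> Poly_Mapping.keys h"
      then have "x = \<beta> \<or> lex_gt \<beta> x" by (rule hkeys)
      then show ?thesis using b(1) by blast
    qed simp
  qed
  have lm': "lm p' = \<mu>"
  proof (rule lm_eqI[OF mup'])
    fix x assume x: "x \<in> Poly_Mapping.keys p'" "x \<noteq> \<mu>"
    show "lex_gt \<mu> x"
    proof (cases "x \<in> Poly_Mapping.keys p")
      case True then show ?thesis using lm_max[OF p(2) True] x(2) p(3) by simp
    next
      case False
      then have "lex_gt \<beta> x" using kp'[OF x(1)] by simp
      then show ?thesis using mub lex_trans by metis
    qed
  qed
  have p'0: "p' \<noteq> 0" using mup' by auto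
  have lc': "lc p' = 1" unfolding lc_def lm' using lp'mu .
  show ?thesis
    apply (rule exI[of _ p'])
    using p'I p'0 lm' lc' lp'b kp' by simp
qed

end

context
  fixes n :: nat and S :: "qpoly set"
  assumes S: "S \<subseteq> polys_in n"
begin

definition goodp :: "monom \<Rightarrow> qpoly \<Rightarrow> bool" where
  "goodp \<mu> q \<longleftrightarrow> q \<in> gen_ideal n S \<and> q \<noteq> 0 \<and> lm q = \<mu> \<and> lc q = 1 \<and>
     (\<forall>x\<in>Poly_Mapping.keys q. x \<noteq> \<mu> \<longrightarrow> \<not> (\<exists>\<kappa>\<in>LMs (gen_ideal n S). mdvd \<kappa> x))"

definition badk :: "monom \<Rightarrow> qpoly \<Rightarrow> monom set" where
  "badk \<mu> q = {x \<in> Poly_Mapping.keys q. x \<noteq> \<mu> \<and> (\<exists>\<kappa>\<in>LMs (gen_ideal n S). mdvd \<kappa> x)}"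

definition Tset :: "monom \<Rightarrow> qpoly set" where
  "Tset \<mu> = {q. q \<in> gen_ideal n S \<and> q \<noteq> 0 \<and> lm q = \<mu> \<and> lc q = 1}"

lemma goodp_iff: "goodp \<mu> q \<longleftrightarrow> q \<in> Tset \<mu> \<and> badk \<mu> q = {}"
  unfolding goodp_def Tset_def badk_def by blast

lemma badk_finite: "finite (badk \<mu> q)"
  unfolding badk_def by simp

lemma good_claim:
  "\<forall>q\<in>Tset \<mu>. b \<in> badk \<mu> q \<and> (\<forall>x\<in>badk \<mu> q. x \<noteq> b \<longrightarrow> lex_gt b x) \<longrightarrow> (\<exists>q'. goodp \<mu> q')"
proof (induction b rule: wf_induct[OF wf_lexR[of n]])
  case (1 b)
  show ?case
  proof (intro ballI impI)
    fix q assume q: "q \<in> Tset \<mu>" and bq: "b \<in> badk \<mu> q \<and> (\<forall>x\<in>badk \<mu> q. x \<noteq> b \<longrightarrow> lex_gt b x)"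
    have qI: "q \<in> gen_ideal n S" "q \<noteq> 0" "lm q = \<mu>" "lc q = 1" using q unfolding Tset_def by auto
    have bk: "b \<in> Poly_Mapping.keys q" "b \<noteq> \<mu>" using bq unfolding badk_def by auto
    obtain \<kappa> where \<kappa>: "\<kappa> \<in> LMs (gen_ideal n S)" "mdvd \<kappa> b" using bq unfolding badk_def by auto
    obtain g0 where g0: "\<kappa> = lm g0" "g0 \<in> gen_ideal n S" "g0 \<noteq> 0" using \<kappa>(1) unfolding LMs_def by blast
    obtain g where g: "g \<in> gen_ideal n S" "g \<noteq> 0" "lm g = lm g0" "lc g = 1"
      using monic_exists[OF S g0(2,3)] by blast
    obtain p' where p': "p' \<in> gen_ideal n S" "p' \<noteq> 0" "lm p' = \<mu>" "lc p' = 1" "Poly_Mapping.lookup p' b = 0"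
       "\<forall>x\<in>Poly_Mapping.keys p'. x \<in> Poly_Mapping.keys q \<or> lex_gt b x"
      using red_step[OF S qI bk g(1,2,4)] \<kappa>(2) g0(1) g(3) by auto
    have p'T: "p' \<in> Tset \<mu>" using p' unfolding Tset_def by simp
    have badlt: "lex_gt b x" if x: "x \<in> badk \<mu> p'" for x
    proof -
      have xk: "x \<in> Poly_Mapping.keys p'" using x unfolding badk_def by simp
      have "x \<noteq> b" using xk p'(5) by (auto simp: in_keys_iff)
      show ?thesis
      proof (cases "x \<in> Poly_Mapping.keys q")
        case True
        then have "x \<in> badk \<mu> q" using x unfolding badk_def by simp
        then show ?thesis using bq \<open>x \<noteq> b\<close> by simp
      next
        case False then show ?thesis using p'(6) xk by blast
      qed
    qed
    show "\<exists>q'. goodp \<mu> q'"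
    proof (cases "badk \<mu> p' = {}")
      case True then show ?thesis using p'T goodp_iff by blast
    next
      case False
      obtain b1 where b1: "b1 \<in> badk \<mu> p'" "\<forall>y\<in>badk \<mu> p'. y \<noteq> b1 \<longrightarrow> lex_gt b1 y"
        using finite_max_ex[OF badk_finite False] by blast
      have "lex_gt b b1" using badlt[OF b1(1)] .
      moreover have "Poly_Mapping.keys b1 \<subseteq> {..<n}"
        using b1(1) unfolding badk_def using polys_in_keys I_polys[OF S p'(1)] by blast
      moreover have "Poly_Mapping.keys b \<subseteq> {..<n}"
        using polys_in_keys I_polys[OF S qI(1)] bk(1) by blast
      ultimately have "(b1, b) \<in> lexR n" unfolding lexR_def by simp
      then have "\<forall>q\<in>Tset \<mu>. b1 \<in> badk \<mu> q \<and> (\<forall>x\<in>badk \<mu> q. x \<noteq> b1 \<longrightarrow> lex_gt b1 x) \<longrightarrow> (\<exists>q'. goodp \<mu> q')"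
        using 1 by blast
      then show ?thesis using p'T b1 by blast
    qed
  qed
qed

lemma exists_good:
  assumes "\<mu> \<in> LMs (gen_ideal n S)"
  shows "\<exists>q. goodp \<mu> q"
proof -
  obtain p where p: "\<mu> = lm p" "p \<in> gen_ideal n S" "p \<noteq> 0" using assms unfolding LMs_def by blast
  obtain q where q: "q \<in> gen_ideal n S" "q \<noteq> 0" "lm q = lm p" "lc q = 1"
    using monic_exists[OF S p(2,3)] by blast
  have qT: "q \<in> Tset \<mu>" using q p(1) unfolding Tset_def by simp
  show ?thesis
  proof (cases "badk \<mu> q = {}")
    case True then show ?thesis using qT goodp_iff by blast
  next
    case False
    obtain b where b: "b \<in> badk \<mu> q" "\<forall>y\<in>badk \<mu> q. y \<noteq> b \<longrightarrow> lex_gt b y"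
      using finite_max_ex[OF badk_finite False] by blast
    show ?thesis using good_claim[of \<mu> b] qT b by blast
  qed
qed

lemma reduced_exists: "\<exists>G. is_reduced_gb n (gen_ideal n S) G"
proof -
  define L where "L = LMs (gen_ideal n S)"
  define M where "M = minL L"
  have Lk: "\<And>\<mu>. \<mu> \<in> L \<Longrightarrow> Poly_Mapping.keys \<mu> \<subseteq> {..<n}" unfolding L_def using LMs_keys[OF S] by blast
  have finM: "finite M" unfolding M_def using finite_minL[OF Lk] by blast
  have MsubL: "M \<subseteq> L" unfolding M_def minL_def by blast
  define gf where "gf \<mu> = (SOME q. goodp \<mu> q)" for \<mu>
  have gfg: "goodp \<mu> (gf \<mu>)" if "\<mu> \<in> M" for \<mu>
  proof -
    have "\<mu> \<in> LMs (gen_ideal n S)" using that MsubL unfolding L_def by blast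
    then show ?thesis unfolding gf_def by (rule someI_ex[OF exists_good])
  qed
  have gfp: "gf \<mu> \<in> gen_ideal n S" "gf \<mu> \<noteq> 0" "lm (gf \<mu>) = \<mu>" "lc (gf \<mu>) = 1"
    "\<forall>x\<in>Poly_Mapping.keys (gf \<mu>). x \<noteq> \<mu> \<longrightarrow> \<not> (\<exists>\<kappa>\<in>L. mdvd \<kappa> x)" if "\<mu> \<in> M" for \<mu>
    using gfg[OF that] unfolding goodp_def L_def by auto
  define G where "G = gf ` M"
  have "is_reduced_gb n (gen_ideal n S) G"
    unfolding is_reduced_gb_def is_groebner_basis_def
  proof (intro conjI)
    show "finite G" unfolding G_def using finM by simp
    show "G \<subseteq> gen_ideal n S" unfolding G_def using gfp(1) by blast
    show "G \<subseteq> polys_in n" unfolding G_def using gfp(1) I_polys[OF S] by blast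
    show "0 \<notin> G" unfolding G_def using gfp(2) by auto
    show "\<forall>p\<in>gen_ideal n S. p \<noteq> 0 \<longrightarrow> (\<exists>g\<in>G. mdvd (lm g) (lm p))"
    proof (intro ballI impI)
      fix p assume p: "p \<in> gen_ideal n S" "p \<noteq> 0"
      then have "lm p \<in> L" unfolding L_def LMs_def by blast
      then obtain \<kappa> where \<kappa>: "\<kappa> \<in> M" "mdvd \<kappa> (lm p)" using minL_below[OF Lk] unfolding M_def by blast
      then have "gf \<kappa> \<in> G" "mdvd (lm (gf \<kappa>)) (lm p)" unfolding G_def using gfp(3)[OF \<kappa>(1)] by auto
      then show "\<exists>g\<in>G. mdvd (lm g) (lm p)" by blast
    qed
    show "\<forall>g\<in>G. lc g = 1 \<and> (\<forall>\<nu>\<in>Poly_Mapping.keys g. \<forall>g'\<in>G - {g}. \<not> mdvd (lm g') \<nu>)"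
    proof (intro ballI conjI)
      fix g assume "g \<in> G"
      then obtain \<mu> where \<mu>: "\<mu> \<in> M" "g = gf \<mu>" unfolding G_def by blast
      show "lc g = 1" using gfp(4)[OF \<mu>(1)] \<mu>(2) by simp
      fix \<nu> g' assume \<nu>: "\<nu> \<in> Poly_Mapping.keys g" and g': "g' \<in> G - {g}"
      show "\<not> mdvd (lm g') \<nu>"
      proof
        assume d: "mdvd (lm g') \<nu>"
        obtain \<mu>' where \<mu>': "\<mu>' \<in> M" "g' = gf \<mu>'" using g' unfolding G_def by blast
        have ne: "\<mu>' \<noteq> \<mu>" using g' \<mu> \<mu>' by auto
        have lm': "lm g' = \<mu>'" using gfp(3)[OF \<mu>'(1)] \<mu>'(2) by simp
        have "\<mu>' \<in> L" using \<mu>'(1) MsubL by blast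
        show False
        proof (cases "\<nu> = \<mu>")
          case True
          then have "mdvd \<mu>' \<mu>" using d lm' by simp
          then have "\<mu>' = \<mu>" using \<mu>(1) \<open>\<mu>' \<in> L\<close> unfolding M_def minL_def by blast
          then show False using ne by simp
        next
          case False
          then have "\<not> (\<exists>\<kappa>\<in>L. mdvd \<kappa> \<nu>)" using gfp(5)[OF \<mu>(1)] \<nu> \<mu>(2) by simp
          then show False using \<open>\<mu>' \<in> L\<close> d lm' by blast
        qed
      qed
    qed
  qed
  then show ?thesis by blast
qed

end

lemma key_in_reduced_contra:
  assumes R: "is_reduced_gb n I G" and g: "g \<in> G" "g \<noteq> 0"
    and mu: "\<mu> \<in> Poly_Mapping.keys g" "\<mu> \<noteq> lm g" "\<mu> \<in> LMs I"
  shows False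
proof -
  obtain d where d: "d \<in> I" "d \<noteq> 0" "lm d = \<mu>" using mu(3) unfolding LMs_def by blast
  then obtain k where k: "k \<in> G" "mdvd (lm k) \<mu>" using R unfolding is_reduced_gb_def is_groebner_basis_def by blast
  show False
  proof (cases "k = g")
    case True
    then have "lex_gt \<mu> (lm g)" using mdvd_lex k(2) mu(2) by metis
    moreover have "lex_gt (lm g) \<mu>" using lm_max[OF g(2) mu(1) mu(2)] .
    ultimately show False using lex_asym by metis
  next
    case False
    then have "k \<in> G - {g}" using k(1) by simp
    then have "\<not> mdvd (lm k) \<mu>" using R g(1) mu(1) unfolding is_reduced_gb_def by blast
    then show False using k(2) by simp
  qed
qed

lemma reduced_sub:
  assumes A: "is_reduced_gb n (gen_ideal n X) G" and B: "is_reduced_gb n (gen_ideal n X) H"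
    and g: "g \<in> G"
  shows "g \<in> H"
proof -
  have GB: "is_groebner_basis n (gen_ideal n X) G" "is_groebner_basis n (gen_ideal n X) H"
    using A B unfolding is_reduced_gb_def by auto
  have gI: "g \<in> gen_ideal n X" "g \<noteq> 0" using GB(1) g unfolding is_groebner_basis_def by auto
  obtain h where h: "h \<in> H" "mdvd (lm h) (lm g)" using GB(2) gI unfolding is_groebner_basis_def by blast
  have hI: "h \<in> gen_ideal n X" "h \<noteq> 0" using GB(2) h(1) unfolding is_groebner_basis_def by auto
  obtain g2 where g2: "g2 \<in> G" "mdvd (lm g2) (lm h)" using GB(1) hI unfolding is_groebner_basis_def by blast
  have d2: "mdvd (lm g2) (lm g)" using mdvd_trans g2(2) h(2) by metis
  have "g2 = g"
  proof (rule ccontr)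
    assume "g2 \<noteq> g"
    then have "g2 \<in> G - {g}" using g2(1) by simp
    then have "\<not> mdvd (lm g2) (lm g)" using A g lm_in[OF gI(2)] unfolding is_reduced_gb_def by blast
    then show False using d2 by simp
  qed
  then have lmeq: "lm h = lm g" using mdvd_antisym g2(2) h(2) by metis
  have lcs: "lc g = 1" "lc h = 1" using A B g h(1) unfolding is_reduced_gb_def by auto
  have "g = h"
  proof (rule ccontr)
    assume ne: "g \<noteq> h"
    define d where "d = g - h"
    have d0: "d \<noteq> 0" using ne unfolding d_def by simp
    have dI: "d \<in> gen_ideal n X" unfolding d_def using gen_ideal_diff gI(1) hI(1) by blast
    have dmu: "lm d \<in> LMs (gen_ideal n X)" using dI d0 unfolding LMs_def by blast
    have "Poly_Mapping.lookup d (lm g) = 0"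
      unfolding d_def lookup_minus using lcs lmeq unfolding lc_def by simp
    then have ne2: "lm d \<noteq> lm g" using lm_in[OF d0] by (auto simp: in_keys_iff)
    have "lm d \<in> Poly_Mapping.keys g \<or> lm d \<in> Poly_Mapping.keys h"
      using lm_in[OF d0] keys_diff[of g h] unfolding d_def by blast
    then show False
    proof
      assume "lm d \<in> Poly_Mapping.keys g"
      then show False using key_in_reduced_contra[OF A g gI(2) _ ne2 dmu] by blast
    next
      assume "lm d \<in> Poly_Mapping.keys h"
      then show False using key_in_reduced_contra[OF B h(1) hI(2) _ _ dmu] ne2 lmeq by simp
    qed
  qed
  then show ?thesis using h(1) by simp
qed

lemma reduced_unique:
  assumes "is_reduced_gb n (gen_ideal n X) G" "is_reduced_gb n (gen_ideal n X) H"
  shows "G = H"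
  using reduced_sub[OF assms(1,2)] reduced_sub[OF assms(2,1)] by blast

lemma reduced_gb_eq:
  assumes "is_reduced_gb n (gen_ideal n X) G"
  shows "reduced_gb n (gen_ideal n X) = G"
  unfolding reduced_gb_def
  using reduced_unique assms by (intro the_equality) blast+

definition sc :: "nat \<Rightarrow> monom \<Rightarrow> monom" where
  "sc m \<mu> = Poly_Mapping.map (\<lambda>k. m * k) \<mu>"

lemma lookup_sc: "Poly_Mapping.lookup (sc m \<mu>) i = m * Poly_Mapping.lookup \<mu> i"
  unfolding sc_def by (simp add: lookup_map_pm)

lemma sc_inj: "m \<ge> 1 \<Longrightarrow> sc m a = sc m b \<Longrightarrow> a = b"
proof -
  assume m: "m \<ge> 1" and e: "sc m a = sc m b"
  show "a = b"
  proof (rule poly_mapping_eqI)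
    fix i
    have "m * Poly_Mapping.lookup a i = m * Poly_Mapping.lookup b i" using e lookup_sc by metis
    then show "Poly_Mapping.lookup a i = Poly_Mapping.lookup b i" using m by simp
  qed
qed

lemma inj_sc: "m \<ge> 1 \<Longrightarrow> inj_on (sc m) A"
  using sc_inj unfolding inj_on_def by blast

lemma sc_add: "sc m (a + b) = sc m a + sc m b"
  by (rule poly_mapping_eqI) (simp add: lookup_sc lookup_add distrib_left)

lemma keys_sc: "m \<ge> 1 \<Longrightarrow> Poly_Mapping.keys (sc m a) = Poly_Mapping.keys a"
  by (auto simp: in_keys_iff lookup_sc)

lemma lex_sc: "m \<ge> 1 \<Longrightarrow> lex_gt (sc m a) (sc m b) \<longleftrightarrow> lex_gt a b"
  unfolding lex_gt_def lookup_sc by simp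

lemma mdvd_sc: "m \<ge> 1 \<Longrightarrow> mdvd (sc m a) (sc m b) \<longleftrightarrow> mdvd a b"
  unfolding mdvd_def lookup_sc by simp

lemma lex_cancel: "lex_gt (a + c) (b + c) \<Longrightarrow> lex_gt a b"
  unfolding lex_gt_def lookup_add by simp

lemma pow_subst_sc: "pow_subst m p = (\<Sum>\<mu>\<in>Poly_Mapping.keys p. Poly_Mapping.single (sc m \<mu>) (Poly_Mapping.lookup p \<mu>))"
  unfolding pow_subst_def sc_def ..

lemma ps_lookup:
  assumes "m \<ge> 1"
  shows "Poly_Mapping.lookup (pow_subst m p) (sc m \<mu>) = Poly_Mapping.lookup p \<mu>"
proof (cases "\<mu> \<in> Poly_Mapping.keys p")
  case True
  then show ?thesis unfolding pow_subst_sc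
    using lookup_sum_single_in[OF finite_keys inj_sc[OF assms] True, where h="Poly_Mapping.lookup p"] by simp
next
  case False
  have "sc m \<mu> \<notin> sc m ` Poly_Mapping.keys p" using False sc_inj[OF assms] by blast
  then show ?thesis unfolding pow_subst_sc using lookup_sum_single_notin False by (metis in_keys_iff)
qed

lemma ps_lookup0:
  assumes "\<And>\<mu>. x \<noteq> sc m \<mu>"
  shows "Poly_Mapping.lookup (pow_subst m p) x = 0"
proof -
  have "x \<notin> sc m ` Poly_Mapping.keys p" using assms by blast
  then show ?thesis unfolding pow_subst_sc by (rule lookup_sum_single_notin)
qed

lemma ps_eqI:
  assumes "m \<ge> 1" "\<And>\<mu>. Poly_Mapping.lookup P (sc m \<mu>) = Poly_Mapping.lookup Q (sc m \<mu>)"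
    "\<And>x. (\<And>\<mu>. x \<noteq> sc m \<mu>) \<Longrightarrow> Poly_Mapping.lookup P x = Poly_Mapping.lookup Q x"
  shows "P = Q"
proof (rule poly_mapping_eqI)
  fix x
  show "Poly_Mapping.lookup P x = Poly_Mapping.lookup Q x"
  proof (cases "\<exists>\<mu>. x = sc m \<mu>")
    case True then show ?thesis using assms(2) by blast
  next
    case False then show ?thesis using assms(3) by blast
  qed
qed

lemma keys_ps: "m \<ge> 1 \<Longrightarrow> Poly_Mapping.keys (pow_subst m p) = sc m ` Poly_Mapping.keys p"
proof
  assume m: "m \<ge> 1"
  show "Poly_Mapping.keys (pow_subst m p) \<subseteq> sc m ` Poly_Mapping.keys p"
  proof
    fix x assume x: "x \<in> Poly_Mapping.keys (pow_subst m p)"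
    show "x \<in> sc m ` Poly_Mapping.keys p"
    proof (rule ccontr)
      assume "x \<notin> sc m ` Poly_Mapping.keys p"
      then have "Poly_Mapping.lookup (pow_subst m p) x = 0" unfolding pow_subst_sc by (rule lookup_sum_single_notin)
      then show False using x by (simp add: in_keys_iff)
    qed
  qed
  show "sc m ` Poly_Mapping.keys p \<subseteq> Poly_Mapping.keys (pow_subst m p)"
    using ps_lookup[OF m] by (auto simp: in_keys_iff)
qed

lemma ps_add: assumes m: "m \<ge> 1" shows "pow_subst m (p + q) = pow_subst m p + pow_subst m q"
proof (rule ps_eqI[OF m])
  fix \<mu> show "Poly_Mapping.lookup (pow_subst m (p + q)) (sc m \<mu>) = Poly_Mapping.lookup (pow_subst m p + pow_subst m q) (sc m \<mu>)"
    by (simp add: ps_lookup[OF m] lookup_add)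
next
  fix x assume "\<And>\<mu>. x \<noteq> sc m \<mu>"
  then show "Poly_Mapping.lookup (pow_subst m (p + q)) x = Poly_Mapping.lookup (pow_subst m p + pow_subst m q) x"
    by (simp add: ps_lookup0 lookup_add)
qed

lemma ps_zero: "pow_subst m 0 = 0"
  unfolding pow_subst_def by simp

lemma ps_sum: assumes m: "m \<ge> 1" shows "finite A \<Longrightarrow> pow_subst m (sum f A) = (\<Sum>x\<in>A. pow_subst m (f x))"
  by (induction A rule: finite_induct) (simp_all add: ps_zero ps_add[OF m])

lemma ps_single: "m \<ge> 1 \<Longrightarrow> pow_subst m (Poly_Mapping.single a c) = Poly_Mapping.single (sc m a) c"
proof (rule ps_eqI)
  assume m: "m \<ge> 1"
  fix \<mu>
  show "Poly_Mapping.lookup (pow_subst m (Poly_Mapping.single a c)) (sc m \<mu>) = Poly_Mapping.lookup (Poly_Mapping.single (sc m a) c) (sc m \<mu>)"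
    using sc_inj[OF m] by (auto simp: ps_lookup[OF m] lookup_single when_def)
next
  fix x assume "\<And>\<mu>. x \<noteq> sc m \<mu>"
  then show "Poly_Mapping.lookup (pow_subst m (Poly_Mapping.single a c)) x = Poly_Mapping.lookup (Poly_Mapping.single (sc m a) c) x"
    using ps_lookup0[of x m] by (auto simp: lookup_single when_def)
qed

lemma ps_mult:
  assumes m: "m \<ge> 1"
  shows "pow_subst m (p * q) = pow_subst m p * pow_subst m q"
proof -
  have "p * q = (\<Sum>\<mu>\<in>Poly_Mapping.keys p. Poly_Mapping.single \<mu> (Poly_Mapping.lookup p \<mu>)) * (\<Sum>\<nu>\<in>Poly_Mapping.keys q. Poly_Mapping.single \<nu> (Poly_Mapping.lookup q \<nu>))"
    by (subst poly_decomp[of p], subst poly_decomp[of q]) (rule refl)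
  also have "\<dots> = (\<Sum>\<mu>\<in>Poly_Mapping.keys p. \<Sum>\<nu>\<in>Poly_Mapping.keys q. Poly_Mapping.single (\<mu> + \<nu>) (Poly_Mapping.lookup p \<mu> * Poly_Mapping.lookup q \<nu>))"
    by (simp add: sum_product mult_single)
  finally have pq: "pow_subst m (p * q) = (\<Sum>\<mu>\<in>Poly_Mapping.keys p. \<Sum>\<nu>\<in>Poly_Mapping.keys q. Poly_Mapping.single (sc m \<mu> + sc m \<nu>) (Poly_Mapping.lookup p \<mu> * Poly_Mapping.lookup q \<nu>))"
    by (simp add: ps_sum[OF m] ps_single[OF m] sc_add)
  have "pow_subst m p * pow_subst m q = (\<Sum>\<mu>\<in>Poly_Mapping.keys p. \<Sum>\<nu>\<in>Poly_Mapping.keys q. Poly_Mapping.single (sc m \<mu> + sc m \<nu>) (Poly_Mapping.lookup p \<mu> * Poly_Mapping.lookup q \<nu>))"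
    unfolding pow_subst_sc by (simp add: sum_product mult_single)
  then show ?thesis using pq by simp
qed

lemma ps_nz: "m \<ge> 1 \<Longrightarrow> p \<noteq> 0 \<Longrightarrow> pow_subst m p \<noteq> 0"
  using keys_ps[of m p] by (metis image_is_empty keys_eq_empty)

lemma ps_lm: 
  assumes m: "m \<ge> 1" and p: "p \<noteq> 0"
  shows "lm (pow_subst m p) = sc m (lm p)"
proof (rule lm_eqI)
  show "sc m (lm p) \<in> Poly_Mapping.keys (pow_subst m p)" using keys_ps[OF m] lm_in[OF p] by simp
  fix \<nu> assume \<nu>: "\<nu> \<in> Poly_Mapping.keys (pow_subst m p)" "\<nu> \<noteq> sc m (lm p)"
  then obtain \<mu> where \<mu>: "\<mu> \<in> Poly_Mapping.keys p" "\<nu> = sc m \<mu>" using keys_ps[OF m] by blast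
  then have "\<mu> \<noteq> lm p" using \<nu>(2) by blast
  then have "lex_gt (lm p) \<mu>" using lm_max[OF p \<mu>(1)] by simp
  then show "lex_gt (sc m (lm p)) \<nu>" using \<mu>(2) lex_sc[OF m] by simp
qed

lemma ps_lc: "m \<ge> 1 \<Longrightarrow> p \<noteq> 0 \<Longrightarrow> lc (pow_subst m p) = lc p"
  unfolding lc_def by (simp add: ps_lm ps_lookup)

lemma ps_polys: "m \<ge> 1 \<Longrightarrow> p \<in> polys_in n \<Longrightarrow> pow_subst m p \<in> polys_in n"
  unfolding polys_in_iff by (auto simp: keys_ps keys_sc)

lemma ps_inj: "m \<ge> 1 \<Longrightarrow> pow_subst m p = pow_subst m q \<Longrightarrow> p = q"
  by (rule poly_mapping_eqI) (metis ps_lookup)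

lemma gen_ideal_sum: "finite A \<Longrightarrow> (\<And>x. x \<in> A \<Longrightarrow> f x \<in> gen_ideal n S) \<Longrightarrow> sum f A \<in> gen_ideal n S"
  by (induction A rule: finite_induct) (simp_all add: gen_ideal_0 gen_ideal_add)

lemma ps_ideal:
  assumes m: "m \<ge> 1" and p: "p \<in> gen_ideal n S"
  shows "pow_subst m p \<in> gen_ideal n (pow_subst m ` S)"
proof -
  obtain F c where F: "finite F" "F \<subseteq> S" "\<forall>s\<in>F. c s \<in> polys_in n" "p = (\<Sum>s\<in>F. c s * s)"
    using p unfolding gen_ideal_def by blast
  have "pow_subst m p = (\<Sum>s\<in>F. pow_subst m (c s) * pow_subst m s)"
    using F(1,4) by (simp add: ps_sum[OF m] ps_mult[OF m])
  also have "\<dots> \<in> gen_ideal n (pow_subst m ` S)"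
  proof (rule gen_ideal_sum[OF F(1)])
    fix s assume s: "s \<in> F"
    show "pow_subst m (c s) * pow_subst m s \<in> gen_ideal n (pow_subst m ` S)"
      by (rule gen_ideal_mult[OF gen_ideal_base ps_polys[OF m]]) (use s F(2,3) in auto)
  qed
  finally show ?thesis .
qed

definition dr :: "nat \<Rightarrow> monom \<Rightarrow> qpoly \<Rightarrow> qpoly" where
  "dr m r p = Abs_poly_mapping (\<lambda>\<mu>. Poly_Mapping.lookup p (r + sc m \<mu>))"

lemma inj_shift_sc: "m \<ge> 1 \<Longrightarrow> inj (\<lambda>\<mu>. r + sc m \<mu>)"
  unfolding inj_def using sc_inj by (metis add_left_cancel)

lemma lookup_dr:
  assumes m: "m \<ge> 1"
  shows "Poly_Mapping.lookup (dr m r p) \<mu> = Poly_Mapping.lookup p (r + sc m \<mu>)"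
proof -
  have "{\<mu>. Poly_Mapping.lookup p (r + sc m \<mu>) \<noteq> 0} = (\<lambda>\<mu>. r + sc m \<mu>) -` Poly_Mapping.keys p"
    by (auto simp: in_keys_iff)
  then have "finite {\<mu>. Poly_Mapping.lookup p (r + sc m \<mu>) \<noteq> 0}"
    using finite_vimageI[OF finite_keys inj_shift_sc[OF m]] by simp
  then show ?thesis unfolding dr_def by simp
qed

lemma dr_add: "m \<ge> 1 \<Longrightarrow> dr m r (p + q) = dr m r p + dr m r q"
  by (rule poly_mapping_eqI) (simp add: lookup_dr lookup_add)

lemma dr_zero: "m \<ge> 1 \<Longrightarrow> dr m r 0 = 0"
  by (rule poly_mapping_eqI) (simp add: lookup_dr)

lemma dr_sum: assumes m: "m \<ge> 1" shows "finite A \<Longrightarrow> dr m r (sum f A) = (\<Sum>x\<in>A. dr m r (f x))"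
  by (induction A rule: finite_induct) (simp_all add: dr_zero[OF m] dr_add[OF m])

lemma dr_single_in:
  assumes m: "m \<ge> 1"
  shows "dr m r (Poly_Mapping.single (r + sc m \<mu>0) e) = Poly_Mapping.single \<mu>0 e"
proof (rule poly_mapping_eqI)
  fix \<mu>
  have "r + sc m \<mu>0 = r + sc m \<mu> \<longleftrightarrow> \<mu>0 = \<mu>" using inj_shift_sc[OF m] by (meson injD)
  then show "Poly_Mapping.lookup (dr m r (Poly_Mapping.single (r + sc m \<mu>0) e)) \<mu> = Poly_Mapping.lookup (Poly_Mapping.single \<mu>0 e) \<mu>"
    by (simp add: lookup_dr[OF m] lookup_single when_def)
qed

lemma dr_single_out:
  assumes m: "m \<ge> 1" and out: "\<And>\<mu>. \<gamma> \<noteq> r + sc m \<mu>"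
  shows "dr m r (Poly_Mapping.single \<gamma> e) = 0"
proof (rule poly_mapping_eqI)
  fix \<mu>
  show "Poly_Mapping.lookup (dr m r (Poly_Mapping.single \<gamma> e)) \<mu> = Poly_Mapping.lookup 0 \<mu>"
    using out[of \<mu>] by (simp add: lookup_dr[OF m] lookup_single when_def)
qed

lemma residue_decomp:
  assumes small: "\<And>i. Poly_Mapping.lookup r i < m"
    and e: "\<alpha> + sc m \<beta> = r + sc m \<mu>"
  shows "\<alpha> = r + sc m (\<mu> - \<beta>)"
proof (rule poly_mapping_eqI)
  fix i
  define a where "a = Poly_Mapping.lookup \<alpha> i"
  define b where "b = Poly_Mapping.lookup \<beta> i"
  define c where "c = Poly_Mapping.lookup \<mu> i"
  define rr where "rr = Poly_Mapping.lookup r i"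
  have eq: "a + m * b = rr + m * c"
    using arg_cong[OF e, of "\<lambda>x. Poly_Mapping.lookup x i"] unfolding a_def b_def c_def rr_def
    by (simp add: lookup_add lookup_sc)
  have rr: "rr < m" unfolding rr_def by (rule small)
  have bc: "b \<le> c"
  proof (rule ccontr)
    assume "\<not> b \<le> c"
    then have "c + 1 \<le> b" by simp
    then have "m * (c + 1) \<le> m * b" by (rule mult_le_mono2)
    then have "rr + m * c < m * b" using rr by (simp add: distrib_left)
    then show False using eq by linarith
  qed
  have "m * b \<le> m * c" using bc by (rule mult_le_mono2)
  then have "a = rr + (m * c - m * b)" using eq by linarith
  also have "m * c - m * b = m * (c - b)" by (simp add: diff_mult_distrib2)
  finally show "Poly_Mapping.lookup \<alpha> i = Poly_Mapping.lookup (r + sc m (\<mu> - \<beta>)) i"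
    unfolding a_def b_def c_def rr_def by (simp add: lookup_add lookup_sc lookup_minus)
qed

lemma dr_mono_mult:
  assumes m: "m \<ge> 1" and small: "\<And>i. Poly_Mapping.lookup r i < m"
  shows "dr m r (Poly_Mapping.single \<alpha> a * Poly_Mapping.single (sc m \<beta>) b) = dr m r (Poly_Mapping.single \<alpha> a) * Poly_Mapping.single \<beta> b"
proof (cases "\<exists>\<mu>0. \<alpha> = r + sc m \<mu>0")
  case True
  then obtain \<mu>0 where \<mu>0: "\<alpha> = r + sc m \<mu>0" by blast
  have "Poly_Mapping.single \<alpha> a * Poly_Mapping.single (sc m \<beta>) b = Poly_Mapping.single (r + sc m (\<mu>0 + \<beta>)) (a * b)"
    by (simp add: mult_single \<mu>0 sc_add add.assoc)
  then show ?thesis using \<mu>0 by (simp add: dr_single_in[OF m] mult_single)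
next
  case False
  have "\<alpha> + sc m \<beta> \<noteq> r + sc m \<mu>" for \<mu>
    using residue_decomp[OF small] False by blast
  then have "dr m r (Poly_Mapping.single (\<alpha> + sc m \<beta>) (a * b)) = 0" by (rule dr_single_out[OF m])
  moreover have "dr m r (Poly_Mapping.single \<alpha> a) = 0" using False by (intro dr_single_out[OF m]) blast
  ultimately show ?thesis by (simp add: mult_single)
qed

lemma dr_mult_ps:
  assumes m: "m \<ge> 1" and small: "\<And>i. Poly_Mapping.lookup r i < m"
  shows "dr m r (c * pow_subst m s) = dr m r c * s"
proof -
  have "c * pow_subst m s = (\<Sum>\<alpha>\<in>Poly_Mapping.keys c. Poly_Mapping.single \<alpha> (Poly_Mapping.lookup c \<alpha>)) * (\<Sum>\<beta>\<in>Poly_Mapping.keys s. Poly_Mapping.single (sc m \<beta>) (Poly_Mapping.lookup s \<beta>))"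
    unfolding pow_subst_sc by (subst poly_decomp[of c]) (rule refl)
  also have "\<dots> = (\<Sum>\<alpha>\<in>Poly_Mapping.keys c. \<Sum>\<beta>\<in>Poly_Mapping.keys s. Poly_Mapping.single \<alpha> (Poly_Mapping.lookup c \<alpha>) * Poly_Mapping.single (sc m \<beta>) (Poly_Mapping.lookup s \<beta>))"
    by (rule sum_product)
  finally have "dr m r (c * pow_subst m s) = (\<Sum>\<alpha>\<in>Poly_Mapping.keys c. \<Sum>\<beta>\<in>Poly_Mapping.keys s. dr m r (Poly_Mapping.single \<alpha> (Poly_Mapping.lookup c \<alpha>)) * Poly_Mapping.single \<beta> (Poly_Mapping.lookup s \<beta>))"
    by (simp add: dr_sum[OF m] dr_mono_mult[OF m small])
  also have "\<dots> = (\<Sum>\<alpha>\<in>Poly_Mapping.keys c. dr m r (Poly_Mapping.single \<alpha> (Poly_Mapping.lookup c \<alpha>))) * (\<Sum>\<beta>\<in>Poly_Mapping.keys s. Poly_Mapping.single \<beta> (Poly_Mapping.lookup s \<beta>))"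
    by (rule sum_product[symmetric])
  also have "\<dots> = dr m r c * s"
    by (simp add: dr_sum[OF m, symmetric] poly_decomp[symmetric])
  finally show ?thesis .
qed

lemma dr_polys:
  assumes m: "m \<ge> 1" and c: "c \<in> polys_in n"
  shows "dr m r c \<in> polys_in n"
  unfolding polys_in_iff
proof
  fix \<mu> assume "\<mu> \<in> Poly_Mapping.keys (dr m r c)"
  then have "r + sc m \<mu> \<in> Poly_Mapping.keys c" by (simp add: in_keys_iff lookup_dr[OF m])
  then have k: "Poly_Mapping.keys (r + sc m \<mu>) \<subseteq> {..<n}" using c polys_in_keys by blast
  have "Poly_Mapping.keys \<mu> \<subseteq> Poly_Mapping.keys (r + sc m \<mu>)"
    using m by (auto simp: in_keys_iff lookup_add lookup_sc)
  then show "Poly_Mapping.keys \<mu> \<subseteq> {..<n}" using k by blast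
qed

lemma dr_ideal:
  assumes m: "m \<ge> 1" and small: "\<And>i. Poly_Mapping.lookup r i < m"
    and p: "p \<in> gen_ideal n (pow_subst m ` S)"
  shows "dr m r p \<in> gen_ideal n S"
proof -
  obtain F c where F: "finite F" "F \<subseteq> pow_subst m ` S" "\<forall>t\<in>F. c t \<in> polys_in n" "p = (\<Sum>t\<in>F. c t * t)"
    using p unfolding gen_ideal_def by blast
  define sf where "sf t = (SOME s. s \<in> S \<and> t = pow_subst m s)" for t
  have sf: "sf t \<in> S \<and> t = pow_subst m (sf t)" if "t \<in> F" for t
  proof -
    have "\<exists>s. s \<in> S \<and> t = pow_subst m s" using that F(2) by blast
    then show ?thesis unfolding sf_def by (rule someI_ex)
  qed
  have "dr m r p = (\<Sum>t\<in>F. dr m r (c t * t))" using F(1,4) dr_sum[OF m] by simp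
  also have "\<dots> = (\<Sum>t\<in>F. dr m r (c t) * sf t)"
  proof (rule sum.cong[OF refl])
    fix t assume "t \<in> F"
    then have e: "t = pow_subst m (sf t)" using sf by blast
    have "dr m r (c t * t) = dr m r (c t * pow_subst m (sf t))"
      using arg_cong[OF e, of "\<lambda>x. dr m r (c t * x)"] .
    also have "\<dots> = dr m r (c t) * sf t" by (rule dr_mult_ps[OF m small])
    finally show "dr m r (c t * t) = dr m r (c t) * sf t" .
  qed
  also have "\<dots> \<in> gen_ideal n S"
  proof (rule gen_ideal_sum[OF F(1)])
    fix t assume t: "t \<in> F"
    show "dr m r (c t) * sf t \<in> gen_ideal n S"
      by (rule gen_ideal_mult[OF gen_ideal_base dr_polys[OF m]]) (use t sf F(3) in auto)
  qed
  finally show ?thesis .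
qed

lemma reduced_pow:
  assumes S: "S \<subseteq> polys_in n" and m: "m \<ge> 1"
    and R: "is_reduced_gb n (gen_ideal n S) G"
  shows "is_reduced_gb n (gen_ideal n (pow_subst m ` S)) (pow_subst m ` G)"
proof -
  have Gfin: "finite G" and GI: "G \<subseteq> gen_ideal n S" and Gp: "G \<subseteq> polys_in n" and G0: "0 \<notin> G"
    and GB: "\<forall>p\<in>gen_ideal n S. p \<noteq> 0 \<longrightarrow> (\<exists>g\<in>G. mdvd (lm g) (lm p))"
    and Gred: "\<forall>g\<in>G. lc g = 1 \<and> (\<forall>\<mu>\<in>Poly_Mapping.keys g. \<forall>g'\<in>G - {g}. \<not> mdvd (lm g') \<mu>)"
    using R unfolding is_reduced_gb_def is_groebner_basis_def by auto
  have gnz: "g \<noteq> 0" if "g \<in> G" for g using G0 that by auto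
  show ?thesis
    unfolding is_reduced_gb_def is_groebner_basis_def
  proof (intro conjI)
    show "finite (pow_subst m ` G)" using Gfin by simp
    show "pow_subst m ` G \<subseteq> gen_ideal n (pow_subst m ` S)" using GI ps_ideal[OF m] by blast
    show "pow_subst m ` G \<subseteq> polys_in n" using Gp ps_polys[OF m] by blast
    show "0 \<notin> pow_subst m ` G" using ps_nz[OF m] gnz by fastforce
    show "\<forall>p\<in>gen_ideal n (pow_subst m ` S). p \<noteq> 0 \<longrightarrow> (\<exists>g\<in>pow_subst m ` G. mdvd (lm g) (lm p))"
    proof (intro ballI impI)
      fix p assume pJ: "p \<in> gen_ideal n (pow_subst m ` S)" and p0: "p \<noteq> 0"
      define \<nu> where "\<nu> = lm p"
      define r where "r = Poly_Mapping.map (\<lambda>k. k mod m) \<nu>"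
      define \<mu> where "\<mu> = Poly_Mapping.map (\<lambda>k. k div m) \<nu>"
      have lr: "Poly_Mapping.lookup r i = Poly_Mapping.lookup \<nu> i mod m" for i
        unfolding r_def by (simp add: lookup_map_pm)
      have lmu: "Poly_Mapping.lookup \<mu> i = Poly_Mapping.lookup \<nu> i div m" for i
        unfolding \<mu>_def by (simp add: lookup_map_pm)
      have small: "Poly_Mapping.lookup r i < m" for i using m lr by simp
      have nueq: "\<nu> = r + sc m \<mu>"
        by (rule poly_mapping_eqI) (simp add: lookup_add lookup_sc lr lmu mod_mult_div_eq)
      define q where "q = dr m r p"
      have qI: "q \<in> gen_ideal n S" unfolding q_def using dr_ideal[OF m small pJ] .
      have lq: "Poly_Mapping.lookup q \<mu>' = Poly_Mapping.lookup p (r + sc m \<mu>')" for \<mu>'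
        unfolding q_def by (rule lookup_dr[OF m])
      have "Poly_Mapping.lookup q \<mu> \<noteq> 0" using lq[of \<mu>] nueq lm_in[OF p0] unfolding \<nu>_def by (simp add: in_keys_iff)
      then have muq: "\<mu> \<in> Poly_Mapping.keys q" by (simp add: in_keys_iff)
      then have q0: "q \<noteq> 0" by auto
      have lmq: "lm q = \<mu>"
      proof (rule lm_eqI[OF muq])
        fix \<mu>' assume \<mu>': "\<mu>' \<in> Poly_Mapping.keys q" "\<mu>' \<noteq> \<mu>"
        have k: "r + sc m \<mu>' \<in> Poly_Mapping.keys p" using \<mu>'(1) lq by (simp add: in_keys_iff)
        have "r + sc m \<mu>' \<noteq> \<nu>" using \<mu>'(2) nueq inj_shift_sc[OF m] by (metis injD)
        then have "lex_gt \<nu> (r + sc m \<mu>')" using lm_max[OF p0 k] unfolding \<nu>_def by simp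
        then have "lex_gt (sc m \<mu> + r) (sc m \<mu>' + r)" using nueq by (simp add: add.commute)
        then have "lex_gt (sc m \<mu>) (sc m \<mu>')" by (rule lex_cancel)
        then show "lex_gt \<mu> \<mu>'" using lex_sc[OF m] by simp
      qed
      obtain g where g: "g \<in> G" "mdvd (lm g) \<mu>" using GB qI q0 lmq by blast
      have "lm (pow_subst m g) = sc m (lm g)" using ps_lm[OF m gnz[OF g(1)]] .
      moreover have "mdvd (sc m (lm g)) \<nu>"
        unfolding mdvd_def
      proof
        fix i
        have "Poly_Mapping.lookup (lm g) i \<le> Poly_Mapping.lookup \<mu> i" using g(2) unfolding mdvd_def by simp
        then have "m * Poly_Mapping.lookup (lm g) i \<le> m * Poly_Mapping.lookup \<mu> i" by (rule mult_le_mono2)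
        moreover have "Poly_Mapping.lookup \<nu> i = Poly_Mapping.lookup r i + m * Poly_Mapping.lookup \<mu> i"
          using arg_cong[OF nueq, of "\<lambda>x. Poly_Mapping.lookup x i"] by (simp add: lookup_add lookup_sc)
        ultimately show "Poly_Mapping.lookup (sc m (lm g)) i \<le> Poly_Mapping.lookup \<nu> i"
          unfolding lookup_sc by linarith
      qed
      ultimately have "mdvd (lm (pow_subst m g)) (lm p)" unfolding \<nu>_def by simp
      then show "\<exists>g\<in>pow_subst m ` G. mdvd (lm g) (lm p)" using g(1) by blast
    qed
    show "\<forall>g\<in>pow_subst m ` G. lc g = 1 \<and> (\<forall>\<mu>\<in>Poly_Mapping.keys g. \<forall>g'\<in>pow_subst m ` G - {g}. \<not> mdvd (lm g') \<mu>)"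
    proof (intro ballI conjI)
      fix h assume "h \<in> pow_subst m ` G"
      then obtain g where g: "g \<in> G" "h = pow_subst m g" by blast
      show "lc h = 1" using g ps_lc[OF m gnz[OF g(1)]] Gred by simp
      fix \<nu> h' assume \<nu>: "\<nu> \<in> Poly_Mapping.keys h" and h': "h' \<in> pow_subst m ` G - {h}"
      obtain \<mu> where \<mu>: "\<mu> \<in> Poly_Mapping.keys g" "\<nu> = sc m \<mu>" using \<nu> g(2) keys_ps[OF m] by blast
      obtain g' where g': "g' \<in> G" "h' = pow_subst m g'" using h' by blast
      have "g' \<noteq> g" using h' g g' by auto
      then have nd: "\<not> mdvd (lm g') \<mu>" using Gred g(1) g'(1) \<mu>(1) by blast
      show "\<not> mdvd (lm h') \<nu>"
        using nd \<mu>(2) g'(2) ps_lm[OF m gnz[OF g'(1)]] mdvd_sc[OF m] by simp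
    qed
  qed
qed

theorem mainTheorem4:
  fixes n m :: nat and S :: "qpoly set"
  assumes "S \<subseteq> polys_in n" and "m \<ge> 1"
  shows "reduced_gb n (gen_ideal n (pow_subst m ` S))
           = pow_subst m ` reduced_gb n (gen_ideal n S)"
proof -
  obtain G where G: "is_reduced_gb n (gen_ideal n S) G" using reduced_exists[OF assms(1)] by blast
  have "reduced_gb n (gen_ideal n S) = G" by (rule reduced_gb_eq[OF G])
  moreover have "reduced_gb n (gen_ideal n (pow_subst m ` S)) = pow_subst m ` G"
    by (rule reduced_gb_eq[OF reduced_pow[OF assms G]])
  ultimately show ?thesis by simp
qed

end
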